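(* With $\mathbb{K}$, $I$, $\mathcal G=(g_0,\dots,g_s)$, $n_i=\deg_y(g_i)$ and $A_0,A_1,\dots$ as in the context, for every integer $n\ge n_s$ the $\mathbb{K}[x]$-module $I_{\le(.,n)}=\{f\in I:\deg_y(f)\le n\}$ is free of rank $n-n_s+1$, with basis $A_{n_s},A_{n_s+1},\dots,A_n$.
   Context: Let $\mathbb{K}$ be a field and $I\subseteq\mathbb{K}[x,y]$ an ideal. Let $\mathcal G=(g_0,\dots,g_s)$ be the reduced minimal Gröbner basis of $I$ for the lexicographic order with $x\prec y$, listed in decreasing order, and $n_i=\deg_y(g_i)$ (so $n_0> n_1>\cdots> n_s$). Define polynomials $A_0,A_1,\dots$ recursively: for $0\le i<n_s$, $A_i=0$; if there is $k\in\{0,\dots,s\}$ with $n_k=i$, then $A_i=g_k$; otherwise ($i>n_s$ and $i\notin\{n_0,\dots,n_s\}$), $A_i$ is obtained from $yA_{i-1}$ by keeping its part of $y$-degree $\ge i$ unchanged and replacing its part of $y$-degree $<i$ by the normal form of that part modulo $\mathcal G$. For a subset $S\subseteq\mathbb{K}[x,y]$, $S_{\le(.,n)}$ denotes the elements of $S$ of $y$-degree at most $n$. *)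

theory Defs
  imports "HOL-Computational_Algebra.Polynomial"
begin

text \<open>Bivariate polynomials K[x,y] are represented as 'a poly poly: polynomials in y
  whose coefficients are polynomials in x. The monomial x^i y^j is the pair (i,j).\<close>

type_synonym 'a bipoly = "'a poly poly"

definition monomials :: "'a::zero bipoly \<Rightarrow> (nat \<times> nat) set" where
  "monomials f = {(i,j). coeff (coeff f j) i \<noteq> 0}"

text \<open>Leading monomial for lex order with x < y: y-degree first, then x-degree.\<close>
definition lm :: "'a::zero bipoly \<Rightarrow> nat \<times> nat" where
  "lm f = (degree (lead_coeff f), degree f)"

definition lex_less :: "nat \<times> nat \<Rightarrow> nat \<times> nat \<Rightarrow> bool" where
  "lex_less m m' \<longleftrightarrow> snd m < snd m' \<or> (snd m = snd m' \<and> fst m < fst m')"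

definition mdvd :: "nat \<times> nat \<Rightarrow> nat \<times> nat \<Rightarrow> bool" where
  "mdvd m m' \<longleftrightarrow> fst m \<le> fst m' \<and> snd m \<le> snd m'"

definition is_ideal :: "'a::comm_ring_1 bipoly set \<Rightarrow> bool" where
  "is_ideal I \<longleftrightarrow> 0 \<in> I \<and> (\<forall>p\<in>I. \<forall>q\<in>I. p + q \<in> I) \<and> (\<forall>p\<in>I. \<forall>q. q * p \<in> I)"

definition gen_ideal :: "'a::comm_ring_1 bipoly set \<Rightarrow> 'a bipoly set" where
  "gen_ideal G = {(\<Sum>g\<in>G. c g * g) | c. True}"

definition is_groebner_basis :: "'a::comm_ring_1 bipoly set \<Rightarrow> 'a bipoly set \<Rightarrow> bool" where
  "is_groebner_basis G I \<longleftrightarrow> finite G \<and> G \<subseteq> I \<and> 0 \<notin> G \<and>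
     (\<forall>f\<in>I. f \<noteq> 0 \<longrightarrow> (\<exists>g\<in>G. mdvd (lm g) (lm f)))"

definition is_reduced_groebner_basis :: "'a::comm_ring_1 bipoly set \<Rightarrow> 'a bipoly set \<Rightarrow> bool" where
  "is_reduced_groebner_basis G I \<longleftrightarrow> is_groebner_basis G I \<and>
     (\<forall>g\<in>G. lead_coeff (lead_coeff g) = 1) \<and>
     (\<forall>g\<in>G. \<forall>g'\<in>G. g' \<noteq> g \<longrightarrow> (\<forall>m\<in>monomials g. \<not> mdvd (lm g') m))"

text \<open>Normal form modulo G: the unique r with f - r in the ideal generated by G and no
  monomial of r divisible by a leading monomial of G (well defined when G is a Groebner basis).\<close>
definition normal_form :: "'a::comm_ring_1 bipoly set \<Rightarrow> 'a bipoly \<Rightarrow> 'a bipoly" where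
  "normal_form G f = (THE r. f - r \<in> gen_ideal G \<and>
      (\<forall>m\<in>monomials r. \<forall>g\<in>G. \<not> mdvd (lm g) m))"

definition low_part :: "'a::comm_monoid_add bipoly \<Rightarrow> nat \<Rightarrow> 'a bipoly" where
  "low_part p i = (\<Sum>j<i. monom (coeff p j) j)"

text \<open>The sequence A_i, for the Groebner basis listed as gs = [g_0,...,g_s]
  (n_s = degree (last gs)).\<close>
primrec Aseq :: "'a::comm_ring_1 bipoly list \<Rightarrow> nat \<Rightarrow> 'a bipoly" where
  "Aseq gs 0 = (if 0 < degree (last gs) then 0
      else if (\<exists>g\<in>set gs. degree g = 0) then (THE g. g \<in> set gs \<and> degree g = 0) else 0)"
| "Aseq gs (Suc i) = (if Suc i < degree (last gs) then 0
      else if (\<exists>g\<in>set gs. degree g = Suc i) then (THE g. g \<in> set gs \<and> degree g = Suc i)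
      else (let p = monom 1 1 * Aseq gs i
            in (p - low_part p (Suc i)) + normal_form (set gs) (low_part p (Suc i))))"

end

theory Submission
  imports Defs
begin


lemma poly_zero_or_less:
  fixes p :: "'b::zero poly"
  assumes "degree p \<le> a" "coeff p a = 0" shows "p = 0 \<or> degree p < a"
  using assms by (metis le_neq_implies_less leading_coeff_0_iff)

lemma lm_in_monomials: "(f::'b::zero bipoly) \<noteq> 0 \<Longrightarrow> lm f \<in> monomials f"
  unfolding lm_def monomials_def by simp

lemma monomials_diff: "monomials ((p::'b::ab_group_add bipoly) - q) \<subseteq> monomials p \<union> monomials q"
  unfolding monomials_def by auto

lemma ideal_add: "is_ideal I \<Longrightarrow> p \<in> I \<Longrightarrow> q \<in> I \<Longrightarrow> p + q \<in> I"
  unfolding is_ideal_def by blast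
lemma ideal_mult: "is_ideal I \<Longrightarrow> p \<in> I \<Longrightarrow> q * p \<in> I"
  unfolding is_ideal_def by blast
lemma ideal_diff: "is_ideal I \<Longrightarrow> p \<in> I \<Longrightarrow> q \<in> I \<Longrightarrow> p - q \<in> I"
proof -
  assume a: "is_ideal I" "p \<in> I" "q \<in> I"
  have "p - q = p + (-1) * q" by simp
  thus ?thesis using a ideal_add ideal_mult by metis
qed
lemma ideal_smult: "is_ideal I \<Longrightarrow> p \<in> I \<Longrightarrow> smult c p \<in> I"
  by (metis ideal_mult mult.commute mult_smult_right mult.right_neutral smult_one)
lemma ideal_sum: assumes "is_ideal I" "finite S" "\<forall>x\<in>S. h x \<in> I" shows "sum h S \<in> I"
  using assms(2,3) by (induction S rule: finite_induct) (use assms(1) in \<open>auto simp: is_ideal_def\<close>)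

lemma gen_ideal_sub: "is_ideal I \<Longrightarrow> G \<subseteq> I \<Longrightarrow> finite G \<Longrightarrow> gen_ideal G \<subseteq> I"
proof
  fix p assume I: "is_ideal I" "G \<subseteq> I" "finite G" and "p \<in> gen_ideal G"
  then obtain c where "p = (\<Sum>g\<in>G. c g * g)" unfolding gen_ideal_def by blast
  moreover have "(\<Sum>g\<in>G. c g * g) \<in> I"
    using I by (intro ideal_sum) (auto intro: ideal_mult)
  ultimately show "p \<in> I" by simp
qed

lemma gen_ideal_I: "p = (\<Sum>g\<in>G. c g * g) \<Longrightarrow> p \<in> gen_ideal G"
  unfolding gen_ideal_def by auto

lemma gen_ideal_add: "p \<in> gen_ideal G \<Longrightarrow> q \<in> gen_ideal G \<Longrightarrow> p + q \<in> gen_ideal G"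
proof -
  assume "p \<in> gen_ideal G" "q \<in> gen_ideal G"
  then obtain c1 c2 where "p = (\<Sum>g\<in>G. c1 g * g)" "q = (\<Sum>g\<in>G. c2 g * g)"
    unfolding gen_ideal_def by blast
  hence "p + q = (\<Sum>g\<in>G. (c1 g + c2 g) * g)" by (simp add: sum.distrib distrib_right)
  thus ?thesis by (rule gen_ideal_I)
qed

lemma gen_ideal_diff: "p \<in> gen_ideal G \<Longrightarrow> q \<in> gen_ideal G \<Longrightarrow> p - q \<in> gen_ideal G"
proof -
  assume "p \<in> gen_ideal G" "q \<in> gen_ideal G"
  then obtain c1 c2 where "p = (\<Sum>g\<in>G. c1 g * g)" "q = (\<Sum>g\<in>G. c2 g * g)"
    unfolding gen_ideal_def by blast
  hence "p - q = (\<Sum>g\<in>G. (c1 g - c2 g) * g)" by (simp add: sum_subtractf left_diff_distrib)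
  thus ?thesis by (rule gen_ideal_I)
qed

lemma gen_ideal_single: "finite G \<Longrightarrow> g \<in> G \<Longrightarrow> h * g \<in> gen_ideal G"
proof -
  assume a: "finite G" "g \<in> G"
  have "(\<Sum>g'\<in>G. (if g' = g then h else 0) * g') = (\<Sum>g'\<in>G. (if g' = g then h * g else 0))"
    by (rule sum.cong) auto
  also have "\<dots> = h * g" using a by simp
  finally have "h * g = (\<Sum>g'\<in>G. (if g' = g then h else 0) * g')" by (rule sym)
  thus ?thesis by (rule gen_ideal_I[where c="\<lambda>g'. if g' = g then h else 0"])
qed

lemma gen_ideal_zero: "0 \<in> gen_ideal G"
  by (rule gen_ideal_I[where c="\<lambda>_. 0"]) simp


lemma nf_exists:
  fixes G :: "'a::field bipoly set"
  assumes fin: "finite G" and nz: "0 \<notin> G"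
  shows "\<exists>r. f - r \<in> gen_ideal G \<and> (\<forall>m\<in>monomials r. \<forall>g\<in>G. \<not> mdvd (lm g) m) \<and> degree r \<le> degree f"
proof -
  define R :: "('a bipoly \<times> 'a bipoly) set" where
    "R = inv_image (less_than <*lex*> less_than) (\<lambda>f. (degree f, degree (lead_coeff f)))"
  have wfR: "wf R" unfolding R_def by (intro wf_inv_image wf_lex_prod wf_less_than)
  show ?thesis
  proof (induction f rule: wf_induct[OF wfR])
    case (1 f)
    show ?case
    proof (cases "f = 0")
      case True
      then show ?thesis by (intro exI[of _ 0]) (simp add: gen_ideal_zero monomials_def)
    next
      case False
      define d where "d = degree f"
      define a where "a = degree (lead_coeff f)"
      define lc where "lc = lead_coeff (lead_coeff f)"
      have lc0: "lc \<noteq> 0" using False unfolding lc_def by simp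
      have dec: "f' = 0 \<or> (f', f) \<in> R"
        if A: "degree f' \<le> d" "coeff f' d = 0 \<or> degree (coeff f' d) < a" for f' :: "'a bipoly"
      proof (cases "f' = 0")
        case False
        show ?thesis
        proof (cases "degree f' < d")
          case True thus ?thesis unfolding R_def d_def by simp
        next
          case False
          hence fd: "degree f' = d" using A by simp
          hence "coeff f' d \<noteq> 0" using \<open>f' \<noteq> 0\<close> by (metis leading_coeff_0_iff)
          hence "degree (lead_coeff f') < a" using A fd by simp
          thus ?thesis unfolding R_def using fd a_def d_def by simp
        qed
      qed simp
      have IH': "\<exists>r. f' - r \<in> gen_ideal G \<and> (\<forall>m\<in>monomials r. \<forall>g\<in>G. \<not> mdvd (lm g) m) \<and> degree r \<le> degree f'"
        if A: "degree f' \<le> d" "coeff f' d = 0 \<or> degree (coeff f' d) < a" for f' :: "'a bipoly"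
        using dec[OF A]
      proof
        assume "f' = 0" thus ?thesis by (intro exI[of _ 0]) (simp add: gen_ideal_zero monomials_def)
      next
        assume "(f', f) \<in> R" thus ?thesis using 1 by blast
      qed
      have lmf: "lm f = (a, d)" unfolding lm_def a_def d_def by simp
      show ?thesis
      proof (cases "\<exists>g\<in>G. mdvd (lm g) (lm f)")
        case True
        then obtain g where g: "g \<in> G" "mdvd (lm g) (lm f)" by blast
        have g0: "g \<noteq> 0" using g nz by auto
        define b where "b = d - degree g"
        define e where "e = a - degree (lead_coeff g)"
        have bd: "b + degree g = d" and ea: "e + degree (lead_coeff g) = a"
          using g(2) lmf unfolding b_def e_def mdvd_def lm_def by auto
        have lcg0: "lead_coeff (lead_coeff g) \<noteq> 0" using g0 by simp
        define c where "c = lc / lead_coeff (lead_coeff g)"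
        have c0: "c \<noteq> 0" using lc0 lcg0 unfolding c_def by simp
        define h where "h = monom (monom c e) b"
        define f' where "f' = f - h * g"
        have hg_coeff: "coeff (h*g) k = (if k < b then 0 else monom c e * coeff g (k - b))" for k
          unfolding h_def by (rule coeff_monom_mult)
        have deg_hg: "degree (h*g) \<le> d"
        proof (rule degree_le, intro allI impI)
          fix k assume "d < k"
          hence "degree g < k - b" using bd by simp
          thus "coeff (h*g) k = 0" using hg_coeff[of k] by (simp add: coeff_eq_0)
        qed
        have db: "d - b = degree g" using bd by simp
        have cd: "coeff (h*g) d = monom c e * lead_coeff g" using hg_coeff[of d] bd db by simp
        have m0: "monom c e \<noteq> 0" using c0 by simp
        have lg0: "lead_coeff g \<noteq> 0" using g0 by simp
        have dega: "degree (monom c e * lead_coeff g) = a"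
          using degree_mult_eq[OF m0 lg0] degree_monom_eq[OF c0] ea by simp
        have lca: "lead_coeff (monom c e * lead_coeff g) = lc"
          unfolding lead_coeff_mult lead_coeff_monom c_def using lcg0 by simp
        have cf': "coeff f' d = lead_coeff f - monom c e * lead_coeff g"
          unfolding f'_def using cd d_def by simp
        have "degree (coeff f' d) \<le> a" unfolding cf'
          by (rule degree_diff_le) (use a_def dega in auto)
        moreover have "coeff (coeff f' d) a = 0" unfolding cf'
          using lca dega lc_def a_def by simp
        ultimately have c1: "coeff f' d = 0 \<or> degree (coeff f' d) < a"
          by (metis poly_zero_or_less)
        have df': "degree f' \<le> d" unfolding f'_def
          by (rule degree_diff_le) (use d_def deg_hg in auto)
        obtain r where r: "f' - r \<in> gen_ideal G" "\<forall>m\<in>monomials r. \<forall>g\<in>G. \<not> mdvd (lm g) m"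
          "degree r \<le> degree f'" using IH'[OF df' c1] by blast
        have "f - r = (f' - r) + h * g" unfolding f'_def by simp
        hence "f - r \<in> gen_ideal G" using r(1) gen_ideal_add gen_ideal_single[OF fin g(1)] by metis
        moreover have "degree r \<le> degree f" using r(3) df' d_def by simp
        ultimately show ?thesis using r(2) by blast
      next
        case False
        define t where "t = monom (monom lc a) d"
        define f' where "f' = f - t"
        have cf': "coeff f' d = lead_coeff f - monom lc a"
          unfolding f'_def t_def d_def by simp
        have "degree (coeff f' d) \<le> a" unfolding cf'
          by (rule degree_diff_le) (use a_def degree_monom_le in auto)
        moreover have "coeff (coeff f' d) a = 0" unfolding cf'
          using lc_def a_def by simp
        ultimately have c1: "coeff f' d = 0 \<or> degree (coeff f' d) < a"
          by (metis poly_zero_or_less)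
        have dt: "degree t \<le> d" unfolding t_def by (rule degree_monom_le)
        have df': "degree f' \<le> d" unfolding f'_def
          by (rule degree_diff_le) (use d_def dt in auto)
        obtain r' where r: "f' - r' \<in> gen_ideal G" "\<forall>m\<in>monomials r'. \<forall>g\<in>G. \<not> mdvd (lm g) m"
          "degree r' \<le> degree f'" using IH'[OF df' c1] by blast
        have "f - (t + r') = f' - r'" unfolding f'_def by simp
        hence "f - (t + r') \<in> gen_ideal G" using r(1) by (simp only:)
        moreover have "degree (t + r') \<le> degree f"
          using r(3) df' dt d_def by (intro degree_add_le) auto
        moreover have "\<forall>m\<in>monomials (t + r'). \<forall>g\<in>G. \<not> mdvd (lm g) m"
        proof (intro ballI)
          fix m g assume m: "m \<in> monomials (t + r')" and gG: "g \<in> G"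
          obtain i j where mij: "m = (i, j)" by force
          have "coeff (coeff (t + r') j) i \<noteq> 0" using m mij unfolding monomials_def by simp
          hence "(i = a \<and> j = d) \<or> coeff (coeff r' j) i \<noteq> 0"
            unfolding t_def by (auto split: if_splits)
          thus "\<not> mdvd (lm g) m"
          proof
            assume "i = a \<and> j = d" thus ?thesis using False gG lmf mij by auto
          next
            assume "coeff (coeff r' j) i \<noteq> 0"
            hence "m \<in> monomials r'" using mij unfolding monomials_def by simp
            thus ?thesis using r(2) gG by blast
          qed
        qed
        ultimately show ?thesis by blast
      qed
    qed
  qed
qed


lemma nf_props:
  fixes G :: "'a::field bipoly set"
  assumes I: "is_ideal I" and GB: "is_groebner_basis G I"
  shows "f - normal_form G f \<in> gen_ideal G \<and> degree (normal_form G f) \<le> degree f"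
proof -
  have fin: "finite G" and GI: "G \<subseteq> I" and nz: "0 \<notin> G"
    and gb: "\<forall>f\<in>I. f \<noteq> 0 \<longrightarrow> (\<exists>g\<in>G. mdvd (lm g) (lm f))"
    using GB unfolding is_groebner_basis_def by auto
  obtain r0 where r0: "f - r0 \<in> gen_ideal G" "\<forall>m\<in>monomials r0. \<forall>g\<in>G. \<not> mdvd (lm g) m"
    "degree r0 \<le> degree f" using nf_exists[OF fin nz, of f] by blast
  have uniq: "r = r0" if A: "f - r \<in> gen_ideal G \<and> (\<forall>m\<in>monomials r. \<forall>g\<in>G. \<not> mdvd (lm g) m)" for r
  proof (rule ccontr)
    assume ne: "r \<noteq> r0"
    have "(f - r) - (f - r0) \<in> gen_ideal G" using A r0(1) by (intro gen_ideal_diff[of "f - r"]) auto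
    moreover have "(f - r) - (f - r0) = r0 - r" by simp
    ultimately have "r0 - r \<in> gen_ideal G" by (simp only:)
    hence "r0 - r \<in> I" using gen_ideal_sub[OF I GI fin] by blast
    moreover have "r0 - r \<noteq> 0" using ne by simp
    ultimately obtain g where g: "g \<in> G" "mdvd (lm g) (lm (r0 - r))" using gb by blast
    have "lm (r0 - r) \<in> monomials r0 \<union> monomials r"
      using lm_in_monomials[OF \<open>r0 - r \<noteq> 0\<close>] monomials_diff by blast
    thus False
    proof
      assume "lm (r0 - r) \<in> monomials r0" thus False using g r0(2) by blast
    next
      assume "lm (r0 - r) \<in> monomials r" thus False using g A by blast
    qed
  qed
  have "normal_form G f = r0" unfolding normal_form_def
  proof (rule the_equality)
    show "f - r0 \<in> gen_ideal G \<and> (\<forall>m\<in>monomials r0. \<forall>g\<in>G. \<not> mdvd (lm g) m)" using r0 by blast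
  next
    fix r assume "f - r \<in> gen_ideal G \<and> (\<forall>m\<in>monomials r. \<forall>g\<in>G. \<not> mdvd (lm g) m)"
    thus "r = r0" by (rule uniq)
  qed
  thus ?thesis using r0 by simp
qed

lemma deg_last_min:
  assumes "sorted_wrt (\<lambda>g h. lex_less (lm h) (lm g)) gs" "gs \<noteq> []" "g \<in> set gs"
  shows "degree (last gs) \<le> degree g"
proof -
  obtain k where k: "k < length gs" "gs ! k = g" using assms(3) by (meson in_set_conv_nth)
  have last: "last gs = gs ! (length gs - 1)" using assms(2) by (rule last_conv_nth)
  show ?thesis
  proof (cases "k = length gs - 1")
    case True thus ?thesis using k last by simp
  next
    case False
    hence "k < length gs - 1" using k by simp
    hence "lex_less (lm (gs ! (length gs - 1))) (lm (gs ! k))"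
      using assms(1) unfolding sorted_wrt_iff_nth_less by auto
    thus ?thesis using k last unfolding lex_less_def lm_def by auto
  qed
qed

lemma red_rule:
  assumes "is_reduced_groebner_basis G I" "g \<in> G" "g' \<in> G" "g' \<noteq> g" "m \<in> monomials g"
  shows "\<not> mdvd (lm g') m"
  using assms unfolding is_reduced_groebner_basis_def by blast

lemma deg_unique:
  assumes R: "is_reduced_groebner_basis G I" and g: "g \<in> G" "g' \<in> G" and d: "degree g = degree g'"
  shows "g = g'"
proof (rule ccontr)
  assume ne: "g \<noteq> g'"
  have nz: "0 \<notin> G" and red: "\<forall>g\<in>G. \<forall>g'\<in>G. g' \<noteq> g \<longrightarrow> (\<forall>m\<in>monomials g. \<not> mdvd (lm g') m)"
    using R unfolding is_reduced_groebner_basis_def is_groebner_basis_def by auto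
  have g0: "g \<noteq> 0" "g' \<noteq> 0" using g nz by auto
  show False
  proof (cases "degree (lead_coeff g) \<le> degree (lead_coeff g')")
    case True
    hence "mdvd (lm g) (lm g')" using d unfolding mdvd_def lm_def by simp
    thus False using red_rule[OF R g(2) g(1) _ lm_in_monomials[OF g0(2)]] ne by blast
  next
    case False
    hence "mdvd (lm g') (lm g)" using d unfolding mdvd_def lm_def by simp
    thus False using red_rule[OF R g(1) g(2) _ lm_in_monomials[OF g0(1)]] ne by blast
  qed
qed

lemma lc_dvd:
  fixes I :: "'a::field bipoly set"
  assumes I: "is_ideal I" and R: "is_reduced_groebner_basis G I"
    and g0: "g0 \<in> G" "degree g0 \<le> d" and mx: "\<forall>g\<in>G. degree g \<le> d \<longrightarrow> degree g \<le> degree g0"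
    and f: "f \<in> I" "f \<noteq> 0" "degree f = d"
  shows "lead_coeff g0 dvd lead_coeff f"
proof -
  have GB: "is_groebner_basis G I" and
    red: "\<forall>g\<in>G. \<forall>g'\<in>G. g' \<noteq> g \<longrightarrow> (\<forall>m\<in>monomials g. \<not> mdvd (lm g') m)"
    using R unfolding is_reduced_groebner_basis_def by auto
  have GI: "G \<subseteq> I" and nz: "0 \<notin> G"
    and gb: "\<forall>f\<in>I. f \<noteq> 0 \<longrightarrow> (\<exists>g\<in>G. mdvd (lm g) (lm f))"
    using GB unfolding is_groebner_basis_def by auto
  have g00: "g0 \<noteq> 0" using g0 nz by auto
  define L where "L = lead_coeff g0"
  have L0: "L \<noteq> 0" using g00 unfolding L_def by simp
  define q where "q = lead_coeff f div L"
  define r where "r = lead_coeff f mod L"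
  define f' where "f' = f - monom q (d - degree g0) * g0"
  have f'I: "f' \<in> I" unfolding f'_def using I f(1) g0(1) GI
    by (intro ideal_diff ideal_mult) auto
  have "coeff (monom q (d - degree g0) * g0) d = q * L"
    unfolding coeff_monom_mult L_def using g0(2) by simp
  hence cf': "coeff f' d = r" unfolding f'_def r_def q_def using f(3)
    by (simp add: mod_eq_self_iff_div_eq_0 minus_div_mult_eq_mod[symmetric] mult.commute)
  have "degree (monom q (d - degree g0) * g0) \<le> d"
    using degree_mult_le[of "monom q (d - degree g0)" g0] degree_monom_le[of q "d - degree g0"] g0(2)
    by linarith
  hence df': "degree f' \<le> d" unfolding f'_def using f(3) by (intro degree_diff_le) auto
  have "r = 0"
  proof (rule ccontr)
    assume r0: "r \<noteq> 0"
    hence f'0: "f' \<noteq> 0" using cf' by auto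
    have "d \<le> degree f'" using cf' r0 by (metis le_degree)
    hence dfd: "degree f' = d" using df' by simp
    hence lmf': "lm f' = (degree r, d)" unfolding lm_def using cf' by simp
    obtain g1 where g1: "g1 \<in> G" "mdvd (lm g1) (lm f')" using gb f'I f'0 by blast
    have "degree r < degree L" using degree_mod_less'[OF L0] r0 unfolding r_def by blast
    hence a1: "degree (lead_coeff g1) < degree (lead_coeff g0)" and b1: "degree g1 \<le> d"
      using g1(2) lmf' unfolding mdvd_def lm_def L_def by auto
    have "degree g1 \<le> degree g0" using mx g1(1) b1 by blast
    hence "mdvd (lm g1) (lm g0)" using a1 unfolding mdvd_def lm_def by simp
    moreover have "g1 \<noteq> g0" using a1 by auto
    ultimately show False using red_rule[OF R g0(1) g1(1) _ lm_in_monomials[OF g00]] by blast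
  qed
  thus ?thesis unfolding r_def L_def by (simp add: dvd_eq_mod_eq_0)
qed



lemma coeff_low_part: "coeff (low_part p i) k = (if k < i then coeff p k else 0)"
  unfolding low_part_def by (simp add: coeff_sum)

lemma Aseq_props:
  fixes I :: "'a::field bipoly set"
  assumes I: "is_ideal I" and R: "is_reduced_groebner_basis (set gs) I"
    and ne: "gs \<noteq> []" and srt: "sorted_wrt (\<lambda>g h. lex_less (lm h) (lm g)) gs"
    and le0: "degree (last gs) \<le> i"
  shows "Aseq gs i \<in> I \<and> Aseq gs i \<noteq> 0 \<and> degree (Aseq gs i) = i \<and>
    (\<exists>g\<in>set gs. degree g \<le> i \<and> (\<forall>g'\<in>set gs. degree g' \<le> i \<longrightarrow> degree g' \<le> degree g)
        \<and> lead_coeff (Aseq gs i) = lead_coeff g)"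
proof -
  have GB: "is_groebner_basis (set gs) I" using R unfolding is_reduced_groebner_basis_def by auto
  have GI: "set gs \<subseteq> I" and nz: "0 \<notin> set gs" and fin: "finite (set gs)"
    using GB unfolding is_groebner_basis_def by auto
  have lastG: "last gs \<in> set gs" using ne by simp
  have case1: "Aseq gs i \<in> I \<and> Aseq gs i \<noteq> 0 \<and> degree (Aseq gs i) = i \<and>
    (\<exists>g\<in>set gs. degree g \<le> i \<and> (\<forall>g'\<in>set gs. degree g' \<le> i \<longrightarrow> degree g' \<le> degree g)
        \<and> lead_coeff (Aseq gs i) = lead_coeff g)"
    if le: "degree (last gs) \<le> i" and ex: "\<exists>g\<in>set gs. degree g = i" for i
  proof -
    obtain g where g: "g \<in> set gs" "degree g = i" using ex by blast
    have th: "(THE g. g \<in> set gs \<and> degree g = i) = g"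
      by (rule the_equality) (use g deg_unique[OF R] in auto)
    have "Aseq gs i = (THE g. g \<in> set gs \<and> degree g = i)"
      using le ex by (cases i) auto
    hence A: "Aseq gs i = g" using th by simp
    show ?thesis unfolding A using g GI nz by auto
  qed
  show ?thesis using le0
  proof (induction i)
    case 0
    hence "\<exists>g\<in>set gs. degree g = 0" using lastG by auto
    thus ?case using case1 0 by blast
  next
    case (Suc j)
    show ?case
    proof (cases "\<exists>g\<in>set gs. degree g = Suc j")
      case True thus ?thesis using case1 Suc.prems by blast
    next
      case False
      hence "degree (last gs) \<noteq> Suc j" using lastG by blast
      hence lej: "degree (last gs) \<le> j" using Suc.prems by simp
      define A where "A = Aseq gs j"
      from Suc.IH[OF lej] obtain g where AI: "A \<in> I" and A0: "A \<noteq> 0" and dA: "degree A = j"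
        and g: "g \<in> set gs" "degree g \<le> j" "\<forall>g'\<in>set gs. degree g' \<le> j \<longrightarrow> degree g' \<le> degree g"
        "lead_coeff A = lead_coeff g"
        unfolding A_def by blast
      define p where "p = monom 1 1 * A"
      define low where "low = low_part p (Suc j)"
      define r where "r = normal_form (set gs) low"
      have eq: "Aseq gs (Suc j) = (p - low) + r"
        using Suc.prems False by (simp add: Let_def p_def low_def r_def A_def)
      have cp: "coeff p k = (if k < 1 then 0 else coeff A (k - 1))" for k
        unfolding p_def coeff_monom_mult by simp
      have nf: "low - r \<in> gen_ideal (set gs)" "degree r \<le> degree low"
        using nf_props[OF I GB, of low] unfolding r_def by auto
      have dlow: "degree low \<le> j"
        by (rule degree_le) (simp add: low_def coeff_low_part)
      have cA: "coeff (Aseq gs (Suc j)) k = coeff p k" if "Suc j \<le> k" for k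
      proof -
        have "coeff low k = 0" using that by (simp add: low_def coeff_low_part)
        moreover have "coeff r k = 0" using that nf(2) dlow by (intro coeff_eq_0) simp
        ultimately show ?thesis unfolding eq by simp
      qed
      have top: "coeff (Aseq gs (Suc j)) (Suc j) = lead_coeff A"
        using cA[of "Suc j"] cp[of "Suc j"] dA by simp
      have hi: "coeff (Aseq gs (Suc j)) k = 0" if "Suc j < k" for k
        using cA[of k] cp[of k] that dA by (simp add: coeff_eq_0)
      have d1: "degree (Aseq gs (Suc j)) \<le> Suc j" by (rule degree_le) (use hi in auto)
      have lA0: "lead_coeff A \<noteq> 0" using A0 by simp
      have d2: "Suc j \<le> degree (Aseq gs (Suc j))" using top lA0 by (metis le_degree)
      have dS: "degree (Aseq gs (Suc j)) = Suc j" using d1 d2 by simp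
      have nzS: "Aseq gs (Suc j) \<noteq> 0" using top lA0 by (metis coeff_0)
      have lcS: "lead_coeff (Aseq gs (Suc j)) = lead_coeff g" using top dS g(4) by simp
      have pI: "p \<in> I" unfolding p_def using I AI by (rule ideal_mult)
      have "low - r \<in> I" using nf(1) gen_ideal_sub[OF I GI fin] by blast
      hence "p - (low - r) \<in> I" using ideal_diff[OF I pI] by blast
      moreover have "p - (low - r) = Aseq gs (Suc j)" unfolding eq by simp
      ultimately have SI: "Aseq gs (Suc j) \<in> I" by simp
      have mx: "\<forall>g'\<in>set gs. degree g' \<le> Suc j \<longrightarrow> degree g' \<le> degree g"
      proof (intro ballI impI)
        fix g' assume "g' \<in> set gs" "degree g' \<le> Suc j"
        moreover hence "degree g' \<noteq> Suc j" using False by blast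
        ultimately show "degree g' \<le> degree g" using g(3) by simp
      qed
      have "degree g \<le> Suc j" using g(2) by simp
      thus ?thesis using SI nzS dS lcS mx g(1) by blast
    qed
  qed
qed


theorem lemma2:
  fixes I :: "'a::field poly poly set" and gs :: "'a poly poly list" and n :: nat
  assumes "is_ideal I"
    and "is_reduced_groebner_basis (set gs) I"
    and "gs \<noteq> []"
    and "sorted_wrt (\<lambda>g h. lex_less (lm h) (lm g)) gs"
    and "degree (last gs) \<le> n"
  shows "(\<forall>i\<in>{degree (last gs)..n}. Aseq gs i \<in> I \<and> degree (Aseq gs i) \<le> n)
    \<and> (\<forall>f\<in>I. degree f \<le> n \<longrightarrow>
          (\<exists>c. f = (\<Sum>i=degree (last gs)..n. smult (c i) (Aseq gs i))))
    \<and> (\<forall>c. (\<Sum>i=degree (last gs)..n. smult (c i) (Aseq gs i)) = 0 \<longrightarrow>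
          (\<forall>i\<in>{degree (last gs)..n}. c i = 0))
    \<and> card (Aseq gs ` {degree (last gs)..n}) = n - degree (last gs) + 1"
proof -
  note I = assms(1) and R = assms(2) and ne = assms(3) and srt = assms(4)
  define ns where "ns = degree (last gs)"
  define A where "A = Aseq gs"
  have GB: "is_groebner_basis (set gs) I" using R unfolding is_reduced_groebner_basis_def by auto
  have gb: "\<forall>f\<in>I. f \<noteq> 0 \<longrightarrow> (\<exists>g\<in>set gs. mdvd (lm g) (lm f))"
    using GB unfolding is_groebner_basis_def by auto
  have P: "A i \<in> I \<and> A i \<noteq> 0 \<and> degree (A i) = i \<and>
    (\<exists>g\<in>set gs. degree g \<le> i \<and> (\<forall>g'\<in>set gs. degree g' \<le> i \<longrightarrow> degree g' \<le> degree g)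
        \<and> lead_coeff (A i) = lead_coeff g)" if "ns \<le> i" for i
    unfolding A_def using Aseq_props[OF I R ne srt] that ns_def by blast
  have nsn: "ns \<le> n" using assms(5) ns_def by simp
  have part1: "\<forall>i\<in>{ns..n}. A i \<in> I \<and> degree (A i) \<le> n" using P by auto
  have span: "\<forall>f. f \<in> I \<longrightarrow> degree f \<le> n \<longrightarrow> (f \<noteq> 0 \<longrightarrow> degree f < d) \<longrightarrow>
      (\<exists>c. f = (\<Sum>i=ns..n. smult (c i) (A i)))" for d
  proof (induction d)
    case 0
    show ?case
    proof (intro allI impI)
      fix f :: "'a bipoly" assume "f \<noteq> 0 \<longrightarrow> degree f < 0"
      hence "f = 0" by simp
      thus "\<exists>c. f = (\<Sum>i=ns..n. smult (c i) (A i))" by (intro exI[of _ "\<lambda>_. 0"]) simp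
    qed
  next
    case (Suc d)
    show ?case
    proof (intro allI impI)
      fix f :: "'a bipoly" assume fI: "f \<in> I" and fn: "degree f \<le> n" and fd: "f \<noteq> 0 \<longrightarrow> degree f < Suc d"
      show "\<exists>c. f = (\<Sum>i=ns..n. smult (c i) (A i))"
      proof (cases "f = 0 \<or> degree f < d")
        case True thus ?thesis using Suc.IH fI fn by blast
      next
        case False
        hence f0: "f \<noteq> 0" and df: "degree f = d" using fd by auto
        obtain g1 where g1: "g1 \<in> set gs" "mdvd (lm g1) (lm f)" using gb fI f0 by blast
        have "ns \<le> degree g1" unfolding ns_def by (rule deg_last_min[OF srt ne g1(1)])
        moreover have "degree g1 \<le> d" using g1(2) df unfolding mdvd_def lm_def by simp
        ultimately have nsd: "ns \<le> d" by simp
        from P[OF nsd] obtain g0 where AI: "A d \<in> I" and A0: "A d \<noteq> 0" and dA: "degree (A d) = d"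
          and g0: "g0 \<in> set gs" "degree g0 \<le> d" "\<forall>g'\<in>set gs. degree g' \<le> d \<longrightarrow> degree g' \<le> degree g0"
          "lead_coeff (A d) = lead_coeff g0" by blast
        have "lead_coeff g0 dvd lead_coeff f" by (rule lc_dvd[OF I R g0(1,2,3) fI f0 df])
        then obtain q where q: "lead_coeff f = lead_coeff (A d) * q" using g0(4) by (auto elim: dvdE)
        define f' where "f' = f - smult q (A d)"
        have f'I: "f' \<in> I" unfolding f'_def using I fI AI by (intro ideal_diff ideal_smult)
        have df': "degree f' \<le> d" unfolding f'_def using df dA
          by (intro degree_diff_le) (auto simp: degree_smult_le order.trans[OF degree_smult_le])
        have "coeff f' d = 0" unfolding f'_def using q df dA by (simp add: mult.commute)
        hence "f' = 0 \<or> degree f' < d" using df' by (rule poly_zero_or_less[rotated])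
        moreover have "degree f' \<le> n" using df' df fn by simp
        ultimately obtain c' where c': "f' = (\<Sum>i=ns..n. smult (c' i) (A i))"
          using Suc.IH f'I by blast
        define c where "c = (\<lambda>i. c' i + (if i = d then q else 0))"
        have dn: "d \<in> {ns..n}" using nsd df fn by simp
        have "(\<Sum>i=ns..n. smult (c i) (A i)) =
            (\<Sum>i=ns..n. smult (c' i) (A i)) + (\<Sum>i=ns..n. smult (if i = d then q else 0) (A i))"
          unfolding c_def smult_add_left sum.distrib by simp
        also have "(\<Sum>i=ns..n. smult (if i = d then q else 0) (A i)) =
            (\<Sum>i=ns..n. if i = d then smult q (A d) else 0)"
          by (rule sum.cong) auto
        also have "\<dots> = smult q (A d)" using dn by simp
        finally have "(\<Sum>i=ns..n. smult (c i) (A i)) = f" using c' unfolding f'_def by (metis diff_add_cancel)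
        thus ?thesis by (intro exI[of _ c]) simp
      qed
    qed
  qed
  have part2: "\<forall>f\<in>I. degree f \<le> n \<longrightarrow> (\<exists>c. f = (\<Sum>i=ns..n. smult (c i) (A i)))"
    using span[of "Suc n"] by auto
  have part3: "\<forall>i\<in>{ns..n}. c i = 0" if S: "(\<Sum>i=ns..n. smult (c i) (A i)) = 0" for c
  proof (rule ccontr)
    assume nall: "\<not> (\<forall>i\<in>{ns..n}. c i = 0)"
    define K where "K = {i\<in>{ns..n}. c i \<noteq> 0}"
    have Kne: "K \<noteq> {}" and Kfin: "finite K" using nall unfolding K_def by auto
    define M where "M = Max K"
    have MK: "M \<in> K" using Max_in[OF Kfin Kne] unfolding M_def .
    have Mmax: "i \<le> M" if "i \<in> K" for i using Max_ge[OF Kfin that] unfolding M_def .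
    have Mr: "M \<in> {ns..n}" "c M \<noteq> 0" using MK unfolding K_def by auto
    have PM: "A M \<noteq> 0" "degree (A M) = M" using P[of M] Mr by auto
    have "coeff (\<Sum>i=ns..n. smult (c i) (A i)) M = (\<Sum>i=ns..n. c i * coeff (A i) M)"
      by (simp add: coeff_sum)
    also have "\<dots> = (\<Sum>i=ns..n. if i = M then c M * lead_coeff (A M) else 0)"
    proof (rule sum.cong)
      fix i assume i: "i \<in> {ns..n}"
      show "c i * coeff (A i) M = (if i = M then c M * lead_coeff (A M) else 0)"
      proof (cases "i = M")
        case True thus ?thesis using PM by simp
      next
        case False
        show ?thesis
        proof (cases "i < M")
          case True
          have "degree (A i) = i" using P[of i] i by auto
          hence "coeff (A i) M = 0" using True by (intro coeff_eq_0) simp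
          thus ?thesis using False by simp
        next
          case False2: False
          hence "i \<notin> K" using Mmax False by fastforce
          hence "c i = 0" using i unfolding K_def by auto
          thus ?thesis using False by simp
        qed
      qed
    qed simp
    also have "\<dots> = c M * lead_coeff (A M)" using Mr(1) by simp
    finally have "c M * lead_coeff (A M) = 0" using S by simp
    moreover have "lead_coeff (A M) \<noteq> 0" using PM(1) by (rule leading_coeff_neq_0)
    ultimately show False using Mr(2) by (simp only: mult_eq_0_iff) blast
  qed
  have degA: "degree (A i) = i" if "ns \<le> i" for i using P[OF that] by blast
  have inj: "inj_on A {ns..n}"
  proof (rule inj_onI)
    fix i j assume ij: "i \<in> {ns..n}" "j \<in> {ns..n}" and e: "A i = A j"
    have "i = degree (A i)" using degA ij(1) by simp
    also have "\<dots> = degree (A j)" using e by (rule arg_cong)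
    also have "\<dots> = j" using degA ij(2) by simp
    finally show "i = j" .
  qed
  have "card (A ` {ns..n}) = card {ns..n}" by (rule card_image[OF inj])
  hence part4: "card (A ` {ns..n}) = n - ns + 1" using nsn by simp
  have part3': "\<forall>c. (\<Sum>i=ns..n. smult (c i) (A i)) = 0 \<longrightarrow> (\<forall>i\<in>{ns..n}. c i = 0)"
    using part3 by blast
  show ?thesis
  proof (intro conjI)
    show "\<forall>i\<in>{degree (last gs)..n}. Aseq gs i \<in> I \<and> degree (Aseq gs i) \<le> n"
      using part1 unfolding ns_def A_def .
    show "\<forall>f\<in>I. degree f \<le> n \<longrightarrow> (\<exists>c. f = (\<Sum>i=degree (last gs)..n. smult (c i) (Aseq gs i)))"
      using part2 unfolding ns_def A_def .
    show "\<forall>c. (\<Sum>i=degree (last gs)..n. smult (c i) (Aseq gs i)) = 0 \<longrightarrow>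
          (\<forall>i\<in>{degree (last gs)..n}. c i = 0)"
      using part3' unfolding ns_def A_def .
    show "card (Aseq gs ` {degree (last gs)..n}) = n - degree (last gs) + 1"
      using part4 unfolding ns_def A_def .
  qed
qed

end
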